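(* Assume that $z_1,z_2\in D$ are in the same chart and that $f(z_1),f(z_2)$ are in the same chart. If $f$ satisfies the rate conditions of order $0$ and $z_1\in J_{cs}(z_2,L)$, then $\|\pi_{(\lambda,y)}(f(z_1)-f(z_2))\|\le\mu_{cs,1}\|\pi_{(\lambda,y)}(z_1-z_2)\|$.
   Context: $c,u,s$ positive integers, $\Lambda=(\mathbb{R}/\mathbb{Z})^c$, $R_\Lambda=\tfrac12$; points are "in the same chart" if their $\lambda$-components have lifts to $\mathbb{R}^c$ at distance $\le R_\Lambda$; differences, norms, cones and derivatives are computed in such lifts. $\overline B_n(R)$ closed ball at $0$; Euclidean norms. $0<R<R_\Lambda/2$, $D=\Lambda\times\overline B_u(R)\times\overline B_s(R)$, $z=(\lambda,x,y)$, projections $\pi_\lambda,\pi_x,\pi_y,\pi_{(\lambda,y)}$; $f:D\to\Lambda\times\mathbb{R}^u\times\mathbb{R}^s$ is $C^1$, $f=(f_\lambda,f_x,f_y)$. $m(A)=\max\{c:\|Av\|\ge c\|v\|\}$, $m(\mathbf A)=\inf_{A\in\mathbf A}m(A)$; $[\partial g/\partial w(U)]$ = set of matrices with $(i,j)$ entry in $[\inf_U\partial g_i/\partial w_j,\sup_U\partial g_i/\partial w_j]$; $P(z)=\{w\in D:\|\pi_\lambda w-\pi_\lambda z\|\le R_\Lambda/2\}$. Fix $L\in(2R/R_\Lambda,1)$. $\mu_{s,1}=\sup_D\{\|\partial_yf_y\|+\frac1L\|\partial_{(\lambda,x)}f_y\|\}$, $\xi_{u,1,P}=\inf_{z\in D}m[\partial_xf_x(P(z))]-\frac1L\sup_D\|\partial_{(\lambda,y)}f_x\|$,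 $\mu_{cs,1}=\sup_D\{\|\partial_{(\lambda,y)}f_{(\lambda,y)}\|+L\|\partial_xf_{(\lambda,y)}\|\}$, $\xi_{cu,1,P}=\inf_{z\in D}m[\partial_{(\lambda,x)}f_{(\lambda,x)}(P(z))]-L\sup_D\|\partial_yf_{(\lambda,x)}\|$. Rate conditions of order $0$: $\mu_{s,1}<1<\xi_{u,1,P}$, $\mu_{cs,1}<\xi_{u,1,P}$, $\mu_{s,1}<\xi_{cu,1,P}$. $J_{cs}(z,M)=\{(\lambda,x,y):\|x-\pi_xz\|<M\|(\lambda,y)-\pi_{(\lambda,y)}z\|\}\cup\{z\}$. *)

theory Defs
  imports "HOL-Analysis.Analysis"
begin

text \<open>Points of the lifted domain are triples (lambda, x, y) in
  real^'c * real^'u * real^'s; lambda is a lift to R^c of a point of the torus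
  (R/Z)^c.  The map f is represented by a lift F which is Z^c-equivariant
  in lambda (see the theorem).\<close>

definition R_Lam :: real where "R_Lam = 1/2"

definition Zc :: "(real^'c) set" where "Zc = {k. \<forall>i. k $ i \<in> \<int>}"

type_synonym ('c,'u,'s) pt = "(real^('c::finite)) \<times> (real^('u::finite)) \<times> (real^('s::finite))"

definition pl :: "('c::finite,'u::finite,'s::finite) pt \<Rightarrow> real^'c" where "pl z = fst z"
definition px :: "('c::finite,'u::finite,'s::finite) pt \<Rightarrow> real^'u" where "px z = fst (snd z)"
definition py :: "('c::finite,'u::finite,'s::finite) pt \<Rightarrow> real^'s" where "py z = snd (snd z)"
definition ply :: "('c::finite,'u::finite,'s::finite) pt \<Rightarrow> (real^'c) \<times> (real^'s)" where "ply z = (pl z, py z)"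
definition plx :: "('c::finite,'u::finite,'s::finite) pt \<Rightarrow> (real^'c) \<times> (real^'u)" where "plx z = (pl z, px z)"

definition Dl :: "real \<Rightarrow> ('c::finite,'u::finite,'s::finite) pt set" where
  "Dl R = {z. norm (px z) \<le> R \<and> norm (py z) \<le> R}"

definition blk_y_y :: "(('c::finite,'u::finite,'s::finite) pt \<Rightarrow> ('c,'u,'s) pt) \<Rightarrow> real^'s \<Rightarrow> real^'s" where
  "blk_y_y A v = py (A (0, 0, v))"
definition blk_lx_y :: "(('c::finite,'u::finite,'s::finite) pt \<Rightarrow> ('c,'u,'s) pt) \<Rightarrow> (real^'c) \<times> (real^'u) \<Rightarrow> real^'s" where
  "blk_lx_y A w = py (A (fst w, snd w, 0))"
definition blk_x_x :: "(('c::finite,'u::finite,'s::finite) pt \<Rightarrow> ('c,'u,'s) pt) \<Rightarrow> real^'u \<Rightarrow> real^'u" where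
  "blk_x_x A v = px (A (0, v, 0))"
definition blk_ly_x :: "(('c::finite,'u::finite,'s::finite) pt \<Rightarrow> ('c,'u,'s) pt) \<Rightarrow> (real^'c) \<times> (real^'s) \<Rightarrow> real^'u" where
  "blk_ly_x A w = px (A (fst w, 0, snd w))"
definition blk_ly_ly :: "(('c::finite,'u::finite,'s::finite) pt \<Rightarrow> ('c,'u,'s) pt) \<Rightarrow> (real^'c) \<times> (real^'s) \<Rightarrow> (real^'c) \<times> (real^'s)" where
  "blk_ly_ly A w = ply (A (fst w, 0, snd w))"
definition blk_x_ly :: "(('c::finite,'u::finite,'s::finite) pt \<Rightarrow> ('c,'u,'s) pt) \<Rightarrow> real^'u \<Rightarrow> (real^'c) \<times> (real^'s)" where
  "blk_x_ly A v = ply (A (0, v, 0))"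
definition blk_lx_lx :: "(('c::finite,'u::finite,'s::finite) pt \<Rightarrow> ('c,'u,'s) pt) \<Rightarrow> (real^'c) \<times> (real^'u) \<Rightarrow> (real^'c) \<times> (real^'u)" where
  "blk_lx_lx A w = plx (A (fst w, snd w, 0))"
definition blk_y_lx :: "(('c::finite,'u::finite,'s::finite) pt \<Rightarrow> ('c,'u,'s) pt) \<Rightarrow> real^'s \<Rightarrow> (real^'c) \<times> (real^'u)" where
  "blk_y_lx A v = plx (A (0, 0, v))"

definition mlow :: "('a::real_normed_vector \<Rightarrow> 'b::real_normed_vector) \<Rightarrow> real" where
  "mlow A = Sup {c. \<forall>v. c * norm v \<le> norm (A v)}"
definition mset :: "('a::real_normed_vector \<Rightarrow> 'b::real_normed_vector) set \<Rightarrow> real" where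
  "mset S = (INF A\<in>S. mlow A)"

definition ihull :: "('p \<Rightarrow> ('a::euclidean_space \<Rightarrow> 'b::euclidean_space)) \<Rightarrow> 'p set \<Rightarrow> ('a \<Rightarrow> 'b) set" where
  "ihull M U = {A. linear A \<and> (\<forall>j\<in>Basis. \<forall>i\<in>Basis.
      (INF w\<in>U. M w j \<bullet> i) \<le> A j \<bullet> i \<and> A j \<bullet> i \<le> (SUP w\<in>U. M w j \<bullet> i))}"

definition Pset :: "real \<Rightarrow> ('c::finite,'u::finite,'s::finite) pt \<Rightarrow> ('c,'u,'s) pt set" where
  "Pset R z = {w \<in> Dl R. \<exists>k\<in>Zc. norm (pl w - pl z - k) \<le> R_Lam / 2}"

definition mu_s1 :: "real \<Rightarrow> real \<Rightarrow> (('c::finite,'u::finite,'s::finite) pt \<Rightarrow> ('c,'u,'s) pt \<Rightarrow> ('c,'u,'s) pt) \<Rightarrow> real" where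
  "mu_s1 R L DF = (SUP z\<in>Dl R. onorm (blk_y_y (DF z)) + 1/L * onorm (blk_lx_y (DF z)))"

definition xi_u1P :: "real \<Rightarrow> real \<Rightarrow> (('c::finite,'u::finite,'s::finite) pt \<Rightarrow> ('c,'u,'s) pt \<Rightarrow> ('c,'u,'s) pt) \<Rightarrow> real" where
  "xi_u1P R L DF = (INF z\<in>Dl R. mset (ihull (\<lambda>w. blk_x_x (DF w)) (Pset R z)))
      - 1/L * (SUP z\<in>Dl R. onorm (blk_ly_x (DF z)))"

definition mu_cs1 :: "real \<Rightarrow> real \<Rightarrow> (('c::finite,'u::finite,'s::finite) pt \<Rightarrow> ('c,'u,'s) pt \<Rightarrow> ('c,'u,'s) pt) \<Rightarrow> real" where
  "mu_cs1 R L DF = (SUP z\<in>Dl R. onorm (blk_ly_ly (DF z)) + L * onorm (blk_x_ly (DF z)))"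

definition xi_cu1P :: "real \<Rightarrow> real \<Rightarrow> (('c::finite,'u::finite,'s::finite) pt \<Rightarrow> ('c,'u,'s) pt \<Rightarrow> ('c,'u,'s) pt) \<Rightarrow> real" where
  "xi_cu1P R L DF = (INF z\<in>Dl R. mset (ihull (\<lambda>w. blk_lx_lx (DF w)) (Pset R z)))
      - L * (SUP z\<in>Dl R. onorm (blk_y_lx (DF z)))"

definition rate_conditions_0 :: "real \<Rightarrow> real \<Rightarrow> (('c::finite,'u::finite,'s::finite) pt \<Rightarrow> ('c,'u,'s) pt \<Rightarrow> ('c,'u,'s) pt) \<Rightarrow> bool" where
  "rate_conditions_0 R L DF \<longleftrightarrow>
     mu_s1 R L DF < 1 \<and> 1 < xi_u1P R L DF \<and> mu_cs1 R L DF < xi_u1P R L DF \<and>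
     mu_s1 R L DF < xi_cu1P R L DF"

definition J_cs :: "('c::finite,'u::finite,'s::finite) pt \<Rightarrow> real \<Rightarrow> ('c,'u,'s) pt set" where
  "J_cs z M = {w. norm (px w - px z) < M * norm (ply w - ply z)} \<union> {z}"

end

theory Submission imports Defs begin


lemma Dl_eq: "Dl R = (UNIV :: (real^'c::finite) set) \<times> cball (0::real^'u::finite) R \<times> cball (0::real^'s::finite) R"
  by (auto simp: Dl_def px_def py_def)

lemma Zc_small: fixes k :: "real^'c::finite" assumes "k \<in> Zc" "norm k < 1" shows "k = 0"
proof (rule vec_eq_iff[THEN iffD2], rule allI)
  fix i
  have "\<bar>k $ i\<bar> < 1" using component_le_norm_cart[of k i] assms(2) by linarith
  moreover have "k $ i \<in> \<int>" using assms(1) by (auto simp: Zc_def)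
  ultimately show "k $ i = 0 $ i" by (metis Ints_cases abs_less_iff of_int_eq_0_iff zero_index
       less_irrefl linorder_neqE_linordered_idom of_int_less_iff of_int_minus of_int_1 zabs_less_one_iff of_int_abs)
qed

lemma shift_le: fixes a k :: "real^'c::finite" and b :: "'b::real_normed_vector"
  assumes "k \<in> Zc" "norm (a - k) \<le> 1/2" shows "norm (a - k, b) \<le> norm (a, b)"
proof -
  have "norm (a - k) \<le> norm a"
  proof (rule ccontr)
    assume H: "\<not> norm (a - k) \<le> norm a"
    then have "norm k < 1" using norm_triangle_ineq4[of a "a - k"] assms(2) by (simp add: norm_minus_commute) 
    then have "k = 0" using Zc_small assms(1) by blast
    then show False using H by simp
  qed
  then show ?thesis unfolding norm_Pair by (simp add: power_mono)
qed




lemma periodic: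
  fixes F :: "('c::finite,'u::finite,'s::finite) pt \<Rightarrow> ('c,'u,'s) pt"
    and DF :: "('c,'u,'s) pt \<Rightarrow> (('c,'u,'s) pt \<Rightarrow>\<^sub>L ('c,'u,'s) pt)"
  assumes R: "0 < R" and U: "open U" "Dl R \<subseteq> U"
    and der: "\<forall>z\<in>U. (F has_derivative blinfun_apply (DF z)) (at z)"
    and cont: "continuous_on U DF"
    and eqv: "\<forall>z\<in>Dl R. \<forall>j\<in>Zc. \<exists>j'\<in>Zc. F (pl z + j, px z, py z) = F z + (j', 0, 0)"
    and j: "j \<in> Zc" and z: "z \<in> Dl R"
  shows "DF (z + (j,0,0)) = DF z"
proof -
  define s :: "('c,'u,'s) pt" where "s = (j,0,0)"
  have shq: "(pl w + j, px w, py w) = w + s" for w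
    by (cases w) (auto simp: s_def pl_def px_def py_def)
  have sD: "w + s \<in> Dl R" if "w \<in> Dl R" for w
    using that by (auto simp: Dl_def s_def pl_def px_def py_def)
  have e1: "\<exists>j'\<in>Zc. F (w + s) = F w + (j', 0, 0)" if "w \<in> Dl R" for w
    using eqv that j shq by metis
  have Fc: "continuous_on U F"
    using der by (meson continuous_at_imp_continuous_on has_derivative_continuous)
  have Fsc: "continuous_on (Dl R) (\<lambda>w. F (w + s))"
    apply (rule continuous_on_compose2[OF Fc])
     apply (intro continuous_intros)
    using sD U by blast
  have FcD: "continuous_on (Dl R) F" using continuous_on_subset[OF Fc U(2)] .
  define G where "G w = pl (F (w + s) - F w)" for w
  have Gc: "continuous_on (Dl R) (\<lambda>w. G w $ i)" for i
    unfolding G_def pl_def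
    by (intro continuous_intros Fsc FcD)
  have GZ: "G w $ i \<in> \<int>" if "w \<in> Dl R" for w i
    using e1[OF that] by (auto simp: G_def pl_def Zc_def)
  have conn: "connected (Dl R :: ('c,'u,'s) pt set)"
    unfolding Dl_eq by (intro convex_connected convex_Times convex_UNIV convex_cball)
  have 0: "0 \<in> Dl R" using R by (simp add: Dl_eq zero_prod_def)
  have Gconst: "G w = G 0" if "w \<in> Dl R" for w
  proof (rule vec_eq_iff[THEN iffD2], rule allI)
    fix i
    have "(\<lambda>w. G w $ i) constant_on Dl R"
    proof (rule continuous_discrete_range_constant[OF conn Gc])
      fix x :: "('c,'u,'s) pt" assume x: "x \<in> Dl R"
      show "\<exists>e>0. \<forall>y. y \<in> Dl R \<and> G y $ i \<noteq> G x $ i \<longrightarrow> e \<le> norm (G y $ i - G x $ i)"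
      proof (intro exI[of _ 1] conjI allI impI)
        fix y :: "('c,'u,'s) pt" assume "y \<in> Dl R \<and> G y $ i \<noteq> G x $ i"
        then have "G y $ i - G x $ i \<in> \<int>" "G y $ i - G x $ i \<noteq> 0" using GZ x by auto
        then show "1 \<le> norm (G y $ i - G x $ i)"
          by (metis Ints_cases of_int_0 of_int_1 of_int_abs of_int_le_iff real_norm_def zero_less_abs_iff
              int_one_le_iff_zero_less)
      qed simp
    qed
    then show "G w $ i = G 0 $ i" using that 0 unfolding constant_on_def by metis
  qed
  define c where "c = G 0"
  have Fs: "F (w + s) = F w + (c, 0, 0)" if wD: "w \<in> Dl R" for w
  proof -
    obtain j' where "F (w + s) = F w + (j', 0, 0)" using e1[OF wD] by blast
    moreover have "G w = j'" using calculation by (simp add: G_def pl_def)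
    ultimately show ?thesis using Gconst[OF wD] c_def by simp
  qed
  define S0 :: "('c,'u,'s) pt set" where "S0 = UNIV \<times> ball 0 R \<times> ball 0 R"
  have S0o: "open S0" unfolding S0_def by (intro open_Times open_UNIV open_ball)
  have S0D: "S0 \<subseteq> Dl R" unfolding S0_def Dl_eq by auto
  have clS0: "closure S0 = Dl R" unfolding S0_def Dl_eq closure_Times using R by simp
  have inner: "DF (w + s) - DF w = 0" if w: "w \<in> S0" for w
  proof -
    have wD: "w \<in> Dl R" using w S0D by blast
    have d1: "((\<lambda>w. F (w + s)) has_derivative blinfun_apply (DF (w + s))) (at w)"
    proof -
      have "((F \<circ> (\<lambda>w. w + s)) has_derivative (blinfun_apply (DF (w + s)) \<circ> id)) (at w)"
        apply (rule diff_chain_at)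
         apply (simp add: id_def[symmetric] has_derivative_add_const)
        using der sD[OF wD] U by blast
      then show ?thesis by (simp add: o_def id_def)
    qed
    have "((\<lambda>w. F w + (c,0,0)) has_derivative blinfun_apply (DF w)) (at w)"
      using der wD U by (intro has_derivative_add_const) blast
    then have d2: "((\<lambda>w. F (w + s)) has_derivative blinfun_apply (DF w)) (at w)"
      apply (rule has_derivative_transform_within_open[OF _ S0o w])
      using Fs S0D by auto
    have "blinfun_apply (DF (w + s)) = blinfun_apply (DF w)"
      using has_derivative_unique[OF d1 d2] .
    then show ?thesis by (simp add: blinfun_eqI)
  qed
  have hc: "continuous_on (closure S0) (\<lambda>w. DF (w + s) - DF w)"
    unfolding clS0
    apply (intro continuous_intros)
     apply (rule continuous_on_compose2[OF cont])
      apply (intro continuous_intros)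
    using sD U apply blast
    using continuous_on_subset[OF cont U(2)] .
  have "DF (z + s) - DF z = 0"
    using continuous_constant_on_closure[OF hc inner] z clS0 by blast
  then show ?thesis by (simp add: s_def)
qed




lemma norm_ply_le: "norm (ply v) \<le> norm v"
  by (cases v) (auto simp: ply_def pl_def py_def norm_Pair)

lemma blk1_bl: fixes B :: "('c::finite,'u::finite,'s::finite) pt \<Rightarrow>\<^sub>L ('c,'u,'s) pt" shows "bounded_linear (blk_ly_ly (blinfun_apply B))"
proof -
  have "bounded_linear (\<lambda>v::('c,'u,'s) pt. (fst v, snd (snd v)))"
    by (intro bounded_linear_Pair bounded_linear_fst bounded_linear_compose[OF bounded_linear_snd bounded_linear_snd])
  moreover have "bounded_linear (blinfun_apply B)" by (rule blinfun.bounded_linear_right)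
  moreover have "bounded_linear (\<lambda>w. (fst w, 0::real^'u, snd w))"
    by (intro bounded_linear_Pair bounded_linear_fst bounded_linear_snd bounded_linear_zero bounded_linear_ident)
  ultimately have "bounded_linear ((\<lambda>v::('c,'u,'s) pt. (fst v, snd (snd v))) o blinfun_apply B o (\<lambda>w. (fst w, 0::real^'u, snd w)))"
    by (intro bounded_linear_compose[unfolded o_def[symmetric]])
  then show ?thesis unfolding blk_ly_ly_def ply_def pl_def py_def o_def by simp
qed

lemma blk2_bl: fixes B :: "('c::finite,'u::finite,'s::finite) pt \<Rightarrow>\<^sub>L ('c,'u,'s) pt" shows "bounded_linear (blk_x_ly (blinfun_apply B))"
proof -
  have "bounded_linear (\<lambda>v::('c,'u,'s) pt. (fst v, snd (snd v)))"
    by (intro bounded_linear_Pair bounded_linear_fst bounded_linear_compose[OF bounded_linear_snd bounded_linear_snd])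
  moreover have "bounded_linear (blinfun_apply B)" by (rule blinfun.bounded_linear_right)
  moreover have "bounded_linear (\<lambda>v. (0::real^'c, v, 0::real^'s))"
    by (intro bounded_linear_Pair bounded_linear_fst bounded_linear_snd bounded_linear_zero bounded_linear_ident)
  ultimately have "bounded_linear ((\<lambda>v::('c,'u,'s) pt. (fst v, snd (snd v))) o blinfun_apply B o (\<lambda>v. (0::real^'c, v, 0::real^'s)))"
    by (intro bounded_linear_compose[unfolded o_def[symmetric]])
  then show ?thesis unfolding blk_x_ly_def ply_def pl_def py_def o_def by simp
qed

lemma blk1_le: "onorm (blk_ly_ly (blinfun_apply B)) \<le> norm B"
  apply (rule onorm_le)
  apply (simp add: blk_ly_ly_def)
  apply (rule order_trans[OF norm_ply_le])
  apply (rule order_trans[OF norm_blinfun])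
  apply (case_tac x, simp add: norm_Pair)
  done

lemma blk2_le: "onorm (blk_x_ly (blinfun_apply B)) \<le> norm B"
  apply (rule onorm_le)
  apply (simp add: blk_x_ly_def)
  apply (rule order_trans[OF norm_ply_le])
  apply (rule order_trans[OF norm_blinfun])
  apply (simp add: norm_Pair)
  done




lemma bdd_DF:
  fixes F :: "('c::finite,'u::finite,'s::finite) pt \<Rightarrow> ('c,'u,'s) pt"
    and DF :: "('c,'u,'s) pt \<Rightarrow> (('c,'u,'s) pt \<Rightarrow>\<^sub>L ('c,'u,'s) pt)"
  assumes R: "0 < R" and U: "open U" "Dl R \<subseteq> U"
    and der: "\<forall>z\<in>U. (F has_derivative blinfun_apply (DF z)) (at z)"
    and cont: "continuous_on U DF"
    and eqv: "\<forall>z\<in>Dl R. \<forall>j\<in>Zc. \<exists>j'\<in>Zc. F (pl z + j, px z, py z) = F z + (j', 0, 0)"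
  shows "\<exists>M. \<forall>z\<in>Dl R. norm (DF z) \<le> M"
proof -
  define K :: "('c,'u,'s) pt set" where "K = cbox 0 1 \<times> cball 0 R \<times> cball 0 R"
  have KD: "K \<subseteq> Dl R" unfolding K_def Dl_eq by auto
  have "compact K" unfolding K_def by (intro compact_Times compact_cbox compact_cball)
  moreover have "continuous_on K DF" using continuous_on_subset[OF cont] KD U by blast
  ultimately have "bounded (DF ` K)" by (intro compact_imp_bounded compact_continuous_image)
  then obtain M where M: "\<And>z. z \<in> K \<Longrightarrow> norm (DF z) \<le> M" unfolding bounded_iff by blast
  show ?thesis
  proof (intro exI ballI)
    fix z :: "('c,'u,'s) pt" assume z: "z \<in> Dl R"
    define j :: "real^'c" where "j = (\<chi> i. - of_int \<lfloor>pl z $ i\<rfloor>)"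
    have j: "j \<in> Zc" by (auto simp: j_def Zc_def)
    have "z + (j,0,0) \<in> K"
      using z unfolding K_def Dl_eq
      apply (cases z) apply (auto simp: mem_box_cart j_def pl_def floor_le_iff) by (smt (verit) real_of_int_floor_add_one_gt)
    then have "norm (DF (z + (j,0,0))) \<le> M" by (rule M)
    then show "norm (DF z) \<le> M" using periodic[OF R U der cont eqv j z] by simp
  qed
qed




lemma ply_bl: "bounded_linear (ply :: ('c::finite,'u::finite,'s::finite) pt \<Rightarrow> _)"
  unfolding ply_def pl_def py_def
  by (intro bounded_linear_Pair bounded_linear_fst bounded_linear_compose[OF bounded_linear_snd bounded_linear_snd])

theorem lemma4p8:
  fixes F :: "('c::finite,'u::finite,'s::finite) pt \<Rightarrow> ('c,'u,'s) pt"
    and DF :: "('c,'u,'s) pt \<Rightarrow> (('c,'u,'s) pt \<Rightarrow>\<^sub>L ('c,'u,'s) pt)"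
    and U :: "('c,'u,'s) pt set"
    and R L :: real and z1 z2 :: "('c,'u,'s) pt" and k :: "real^'c"
  assumes "0 < R" "R < R_Lam / 2"
    and "2 * R / R_Lam < L" "L < 1"
    and "open U" "Dl R \<subseteq> U"
    and "\<forall>z\<in>U. (F has_derivative blinfun_apply (DF z)) (at z)"
    and "continuous_on U DF"
    and "\<forall>z\<in>Dl R. \<forall>j\<in>Zc. \<exists>j'\<in>Zc. F (pl z + j, px z, py z) = F z + (j', 0, 0)"
    and "rate_conditions_0 R L (\<lambda>z. blinfun_apply (DF z))"
    and "z1 \<in> Dl R" "z2 \<in> Dl R" "norm (pl z1 - pl z2) \<le> R_Lam"
    and "k \<in> Zc" "norm (pl (F z1) - pl (F z2) - k) \<le> R_Lam"
    and "z1 \<in> J_cs z2 L"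
  shows "norm (ply (F z1) - ply (F z2) - (k, 0))
           \<le> mu_cs1 R L (\<lambda>z. blinfun_apply (DF z)) * norm (ply z1 - ply z2)"
proof -
  note R = assms(1) and U = assms(5,6) and der = assms(7) and cont = assms(8) and eqv = assms(9)
  have Lpos: "0 < L" using assms(1,3) by (simp add: R_Lam_def) 
  obtain M where M: "\<And>z. z \<in> Dl R \<Longrightarrow> norm (DF z) \<le> M"
    using bdd_DF[OF R U der cont eqv] by blast
  define g where "g z = onorm (blk_ly_ly (blinfun_apply (DF z))) + L * onorm (blk_x_ly (blinfun_apply (DF z)))" for z
  have bdd: "bdd_above (g ` Dl R)"
  proof (rule bdd_aboveI2)
    fix z :: "('c,'u,'s) pt" assume z: "z \<in> Dl R"
    have "g z \<le> norm (DF z) + L * norm (DF z)"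
      unfolding g_def using blk1_le[of "DF z"] blk2_le[of "DF z"] Lpos
      by (intro add_mono mult_left_mono) auto
    also have "\<dots> \<le> M + L * M" using M[OF z] Lpos by (intro add_mono mult_left_mono) auto
    finally show "g z \<le> M + L * M" .
  qed
  have mu: "g z \<le> mu_cs1 R L (\<lambda>z. blinfun_apply (DF z))" if "z \<in> Dl R" for z :: "('c,'u,'s) pt"
    unfolding mu_cs1_def g_def[symmetric] using cSUP_upper[OF that bdd] .
  define d where "d = z1 - z2"
  define p where "p t = z2 + t *\<^sub>R d" for t :: real
  have conv: "convex (Dl R :: ('c,'u,'s) pt set)"
    unfolding Dl_eq by (intro convex_Times convex_UNIV convex_cball)
  have pD: "p t \<in> Dl R" if "0 \<le> t" "t \<le> 1" for t
  proof -
    have "p t = (1 - t) *\<^sub>R z2 + t *\<^sub>R z1" by (simp add: p_def d_def algebra_simps)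
    then show ?thesis using convexD[OF conv assms(12) assms(11), of "1 - t" t] that by simp
  qed
  have dphi: "((\<lambda>t. ply (F (p t))) has_derivative (\<lambda>h. ply (DF (p t) (h *\<^sub>R d)))) (at t)"
    if "0 \<le> t" "t \<le> 1" for t
  proof -
    have dp: "(p has_derivative (\<lambda>h. h *\<^sub>R d)) (at t)"
      unfolding p_def by (auto intro!: derivative_eq_intros)
    have "((F \<circ> p) has_derivative (blinfun_apply (DF (p t)) \<circ> (\<lambda>h. h *\<^sub>R d))) (at t)"
      by (rule diff_chain_at[OF dp]) (use der pD[OF that] U in blast)
    then show ?thesis using bounded_linear.has_derivative[OF ply_bl] by (simp add: o_def)
  qed
  have contphi: "continuous_on {0..1} (\<lambda>t. ply (F (p t)))"
    using dphi by (meson atLeastAtMost_iff continuous_at_imp_continuous_on has_derivative_continuous)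
  obtain t where t: "t \<in> {0<..<1}"
    and mvt: "norm (ply (F (p 1)) - ply (F (p 0))) \<le> norm (ply (DF (p t) ((1 - 0) *\<^sub>R d)))"
    using mvt_general[OF zero_less_one contphi dphi] by auto
  have p1: "p 1 = z1" and p0: "p 0 = z2" by (auto simp: p_def d_def)
  obtain a b c where dabc: "d = (a, b, c)" by (cases d)
  define A where "A = DF (p t)"
  have ptD: "p t \<in> Dl R" using t pD by auto
  have "ply (A d) = blk_ly_ly (blinfun_apply A) (a, c) + blk_x_ly (blinfun_apply A) b"
  proof -
    have "d = (a, 0, c) + (0, b, 0)" using dabc by simp
    then have "A d = A (a, 0, c) + A (0, b, 0)" by (metis blinfun.add_right)
    then show ?thesis by (simp add: blk_ly_ly_def blk_x_ly_def ply_def pl_def py_def)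
  qed
  then have "norm (ply (A d)) \<le> onorm (blk_ly_ly (blinfun_apply A)) * norm (a, c)
        + onorm (blk_x_ly (blinfun_apply A)) * norm b"
    using order_trans[OF norm_triangle_ineq add_mono[OF onorm[OF blk1_bl] onorm[OF blk2_bl]]] by simp
  moreover have nac: "norm (a, c) = norm (ply z1 - ply z2)"
    using dabc unfolding d_def by (cases z1, cases z2) (simp add: ply_def pl_def py_def)
  moreover have "norm b \<le> L * norm (a, c)"
  proof -
    have "norm b = norm (px z1 - px z2)" using dabc unfolding d_def by (cases z1, cases z2) (simp add: px_def)
    moreover have "z1 = z2 \<or> norm (px z1 - px z2) < L * norm (ply z1 - ply z2)"
      using assms(16) by (auto simp: J_cs_def)
    ultimately show ?thesis using nac by auto
  qed
  ultimately have "norm (ply (A d)) \<le> g (p t) * norm (ply z1 - ply z2)"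
  proof -
    have o2: "0 \<le> onorm (blk_x_ly (blinfun_apply A))" by (rule onorm_pos_le[OF blk2_bl])
    assume h1: "norm (ply (A d)) \<le> onorm (blk_ly_ly (blinfun_apply A)) * norm (a, c)
        + onorm (blk_x_ly (blinfun_apply A)) * norm b"
      and h2: "norm (a, c) = norm (ply z1 - ply z2)" and h3: "norm b \<le> L * norm (a, c)"
    have "onorm (blk_x_ly (blinfun_apply A)) * norm b \<le> onorm (blk_x_ly (blinfun_apply A)) * (L * norm (a, c))"
      using mult_left_mono[OF h3 o2] .
    then have "norm (ply (A d)) \<le> (onorm (blk_ly_ly (blinfun_apply A)) + L * onorm (blk_x_ly (blinfun_apply A))) * norm (a, c)"
      using h1 by (simp add: algebra_simps)
    then show ?thesis unfolding g_def A_def h2 .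
  qed
  also have "\<dots> \<le> mu_cs1 R L (\<lambda>z. blinfun_apply (DF z)) * norm (ply z1 - ply z2)"
    by (rule mult_right_mono[OF mu[OF ptD]]) simp
  finally have main: "norm (ply (F z1) - ply (F z2)) \<le> mu_cs1 R L (\<lambda>z. blinfun_apply (DF z)) * norm (ply z1 - ply z2)"
    using mvt p1 p0 A_def by simp
  have "norm (ply (F z1) - ply (F z2) - (k, 0)) = norm (pl (F z1) - pl (F z2) - k, py (F z1) - py (F z2))"
    by (simp add: ply_def)
  also have "\<dots> \<le> norm (pl (F z1) - pl (F z2), py (F z1) - py (F z2))"
    using shift_le[OF assms(14)] assms(15) by (simp add: R_Lam_def)
  also have "\<dots> = norm (ply (F z1) - ply (F z2))" by (simp add: ply_def)
  finally show ?thesis using main by linarith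
qed


end
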